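(* Let $A$ be a finite-dimensional associative algebra over $K=\mathbb{R}$ or $\mathbb{C}$ with unit $1$, and let $r\in A\wedge A$. Then the element $[[r,r]]=[r^{12},r^{13}]+[r^{12},r^{23}]+[r^{13},r^{23}]\in A^{\otimes3}$ commutes with every fully symmetric tensor in $A\otimes A\otimes A$ if and only if it commutes with $x\otimes1\otimes1+1\otimes x\otimes1+1\otimes1\otimes x$ for every $x\in A$, i.e. if and only if $[[r,r]]$ is invariant under the adjoint action of the Lie algebra $A_L$ on $A^{\otimes 3}$.
   Context: $A^{\otimes3}$ is an algebra with componentwise multiplication, and commutators are taken there. For $r=\sum_i\alpha_i\otimes\beta_i$, $r^{12}=\sum_i\alpha_i\otimes\beta_i\otimes1$, $r^{13}=\sum_i\alpha_i\otimes1\otimes\beta_i$, $r^{23}=\sum_i1\otimes\alpha_i\otimes\beta_i$. $A_L$ is the Lie algebra on $A$ with bracket $[a,b]=ab-ba$, acting on $A^{\otimes3}$ by $x\cdot T=[x\otimes1\otimes1+1\otimes x\otimes1+1\otimes1\otimes x,\,T]$. *)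

theory Defs
  imports Complex_Main
begin

text \<open>A finite-dimensional algebra A over K is modelled by a basis indexed by a finite
type 'i and structure constants c: e_i e_j = sum_k c i j k e_k. Elements of A are
coefficient vectors 'i => 'k; elements of A(x)A are 'i => 'i => 'k; elements of
A(x)A(x)A are ('i * 'i * 'i) => 'k.\<close>

definition amul :: "('i::finite \<Rightarrow> 'i \<Rightarrow> 'i \<Rightarrow> 'k::comm_ring) \<Rightarrow> ('i \<Rightarrow> 'k) \<Rightarrow> ('i \<Rightarrow> 'k) \<Rightarrow> ('i \<Rightarrow> 'k)" where
  "amul c a b = (\<lambda>k. \<Sum>i\<in>UNIV. \<Sum>j\<in>UNIV. a i * b j * c i j k)"

definition unital_assoc_algebra :: "('i::finite \<Rightarrow> 'i \<Rightarrow> 'i \<Rightarrow> 'k::comm_ring) \<Rightarrow> ('i \<Rightarrow> 'k) \<Rightarrow> bool" where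
  "unital_assoc_algebra c one \<longleftrightarrow>
     (\<forall>a b d. amul c (amul c a b) d = amul c a (amul c b d)) \<and>
     (\<forall>a. amul c one a = a \<and> amul c a one = a)"

definition tmul3 :: "('i::finite \<Rightarrow> 'i \<Rightarrow> 'i \<Rightarrow> 'k::comm_ring) \<Rightarrow> ('i \<times> 'i \<times> 'i \<Rightarrow> 'k) \<Rightarrow> ('i \<times> 'i \<times> 'i \<Rightarrow> 'k) \<Rightarrow> ('i \<times> 'i \<times> 'i \<Rightarrow> 'k)" where
  "tmul3 c T S = (\<lambda>(k1, k2, k3). \<Sum>(i1, i2, i3)\<in>UNIV. \<Sum>(j1, j2, j3)\<in>UNIV.
      T (i1, i2, i3) * S (j1, j2, j3) * c i1 j1 k1 * c i2 j2 k2 * c i3 j3 k3)"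

definition comm3 :: "('i::finite \<Rightarrow> 'i \<Rightarrow> 'i \<Rightarrow> 'k::comm_ring) \<Rightarrow> ('i \<times> 'i \<times> 'i \<Rightarrow> 'k) \<Rightarrow> ('i \<times> 'i \<times> 'i \<Rightarrow> 'k) \<Rightarrow> ('i \<times> 'i \<times> 'i \<Rightarrow> 'k)" where
  "comm3 c T S = (\<lambda>t. tmul3 c T S t - tmul3 c S T t)"

definition r12 :: "('i \<Rightarrow> 'i \<Rightarrow> 'k::comm_ring) \<Rightarrow> ('i \<Rightarrow> 'k) \<Rightarrow> ('i \<times> 'i \<times> 'i \<Rightarrow> 'k)" where
  "r12 r one = (\<lambda>(i, j, k). r i j * one k)"

definition r13 :: "('i \<Rightarrow> 'i \<Rightarrow> 'k::comm_ring) \<Rightarrow> ('i \<Rightarrow> 'k) \<Rightarrow> ('i \<times> 'i \<times> 'i \<Rightarrow> 'k)" where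
  "r13 r one = (\<lambda>(i, j, k). r i k * one j)"

definition r23 :: "('i \<Rightarrow> 'i \<Rightarrow> 'k::comm_ring) \<Rightarrow> ('i \<Rightarrow> 'k) \<Rightarrow> ('i \<times> 'i \<times> 'i \<Rightarrow> 'k)" where
  "r23 r one = (\<lambda>(i, j, k). one i * r j k)"

definition cybe :: "('i::finite \<Rightarrow> 'i \<Rightarrow> 'i \<Rightarrow> 'k::comm_ring) \<Rightarrow> ('i \<Rightarrow> 'k) \<Rightarrow> ('i \<Rightarrow> 'i \<Rightarrow> 'k) \<Rightarrow> ('i \<times> 'i \<times> 'i \<Rightarrow> 'k)" where
  "cybe c one r = (\<lambda>t. comm3 c (r12 r one) (r13 r one) t + comm3 c (r12 r one) (r23 r one) t
                  + comm3 c (r13 r one) (r23 r one) t)"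

definition skew2 :: "('i \<Rightarrow> 'i \<Rightarrow> 'k::comm_ring) \<Rightarrow> bool" where
  "skew2 r \<longleftrightarrow> (\<forall>i j. r j i = - r i j)"

definition fully_symmetric3 :: "('i \<times> 'i \<times> 'i \<Rightarrow> 'k) \<Rightarrow> bool" where
  "fully_symmetric3 T \<longleftrightarrow> (\<forall>i j k.
      T (i, j, k) = T (j, i, k) \<and> T (i, j, k) = T (i, k, j) \<and> T (i, j, k) = T (k, j, i) \<and>
      T (i, j, k) = T (j, k, i) \<and> T (i, j, k) = T (k, i, j))"

definition delta3 :: "('i \<Rightarrow> 'k::comm_ring) \<Rightarrow> ('i \<Rightarrow> 'k) \<Rightarrow> ('i \<times> 'i \<times> 'i \<Rightarrow> 'k)" where
  "delta3 one x = (\<lambda>(i, j, k). x i * one j * one k + one i * x j * one k + one i * one j * x k)"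

end

theory Submission imports Defs begin

lemma amul_apply: "amul c a b k = (\<Sum>i\<in>UNIV. \<Sum>j\<in>UNIV. a i * b j * c i j k)"
  by (simp add: amul_def)

lemma sum_swap_in: "(\<Sum>x\<in>A. \<Sum>y\<in>B. \<Sum>z\<in>C. f x y z) = (\<Sum>x\<in>A. \<Sum>z\<in>C. \<Sum>y\<in>B. f x y z)"
  by (rule sum.cong[OF refl], rule sum.swap)

lemma sum3_rot: "(\<Sum>m\<in>A. \<Sum>l\<in>B. \<Sum>j\<in>C. f m l j) = (\<Sum>j\<in>C. \<Sum>l\<in>B. \<Sum>m\<in>A. f m l j)"
proof -
  have "(\<Sum>m\<in>A. \<Sum>l\<in>B. \<Sum>j\<in>C. f m l j) = (\<Sum>m\<in>A. \<Sum>j\<in>C. \<Sum>l\<in>B. f m l j)" by (rule sum_swap_in)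
  also have "\<dots> = (\<Sum>j\<in>C. \<Sum>m\<in>A. \<Sum>l\<in>B. f m l j)" by (rule sum.swap)
  also have "\<dots> = (\<Sum>j\<in>C. \<Sum>l\<in>B. \<Sum>m\<in>A. f m l j)" by (rule sum_swap_in)
  finally show ?thesis .
qed

lemma sum3_rot2: "(\<Sum>m\<in>A. \<Sum>j\<in>B. \<Sum>l\<in>C. f m j l) = (\<Sum>j\<in>B. \<Sum>l\<in>C. \<Sum>m\<in>A. f m j l)"
proof -
  have "(\<Sum>m\<in>A. \<Sum>j\<in>B. \<Sum>l\<in>C. f m j l) = (\<Sum>j\<in>B. \<Sum>m\<in>A. \<Sum>l\<in>C. f m j l)" by (rule sum.swap)
  also have "\<dots> = (\<Sum>j\<in>B. \<Sum>l\<in>C. \<Sum>m\<in>A. f m j l)" by (rule sum.cong[OF refl], rule sum.swap)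
  finally show ?thesis .
qed

lemma amul_assoc_struct:
  fixes c :: "'j::finite \<Rightarrow> 'j \<Rightarrow> 'j \<Rightarrow> 'k::comm_ring"
  assumes H: "\<And>i j l k. (\<Sum>m\<in>UNIV. c i j m * c m l k) = (\<Sum>m\<in>UNIV. c j l m * c i m k)"
  shows "amul c (amul c a b) d = amul c a (amul c b d)"
proof
  fix k
  have "amul c (amul c a b) d k = (\<Sum>m\<in>UNIV. \<Sum>l\<in>UNIV. \<Sum>i\<in>UNIV. \<Sum>j\<in>UNIV. a i * b j * d l * (c i j m * c m l k))"
    by (simp add: amul_apply sum_distrib_left sum_distrib_right ac_simps)
  also have "\<dots> = (\<Sum>m\<in>UNIV. \<Sum>i\<in>UNIV. \<Sum>l\<in>UNIV. \<Sum>j\<in>UNIV. a i * b j * d l * (c i j m * c m l k))"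
    by (rule sum.cong[OF refl], rule sum.swap)
  also have "\<dots> = (\<Sum>i\<in>UNIV. \<Sum>m\<in>UNIV. \<Sum>l\<in>UNIV. \<Sum>j\<in>UNIV. a i * b j * d l * (c i j m * c m l k))"
    by (rule sum.swap)
  also have "\<dots> = (\<Sum>i\<in>UNIV. \<Sum>j\<in>UNIV. \<Sum>l\<in>UNIV. \<Sum>m\<in>UNIV. a i * b j * d l * (c i j m * c m l k))"
    by (rule sum.cong[OF refl], rule sum3_rot)
  also have "\<dots> = (\<Sum>i\<in>UNIV. \<Sum>j\<in>UNIV. \<Sum>l\<in>UNIV. a i * b j * d l * (\<Sum>m\<in>UNIV. c i j m * c m l k))"
    by (simp add: sum_distrib_left)
  also have "\<dots> = (\<Sum>i\<in>UNIV. \<Sum>j\<in>UNIV. \<Sum>l\<in>UNIV. a i * b j * d l * (\<Sum>m\<in>UNIV. c j l m * c i m k))"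
    by (simp add: H)
  also have "\<dots> = (\<Sum>i\<in>UNIV. \<Sum>j\<in>UNIV. \<Sum>l\<in>UNIV. \<Sum>m\<in>UNIV. a i * b j * d l * (c j l m * c i m k))"
    by (simp add: sum_distrib_left)
  also have "\<dots> = (\<Sum>i\<in>UNIV. \<Sum>m\<in>UNIV. \<Sum>j\<in>UNIV. \<Sum>l\<in>UNIV. a i * b j * d l * (c j l m * c i m k))"
    by (rule sum.cong[OF refl], rule sum3_rot2[symmetric])
  also have "\<dots> = amul c a (amul c b d) k"
    by (simp add: amul_apply sum_distrib_left sum_distrib_right ac_simps)
  finally show "amul c (amul c a b) d k = amul c a (amul c b d) k" .
qed
lemma delta_mult: "(if P then b else 0) * f = (if P then b * f else (0::'k::comm_ring_1))"
  "f * (if P then b else 0) = (if P then f * b else (0::'k::comm_ring_1))"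
  by simp_all

lemma sum_if_out: "(\<Sum>j\<in>A. if P then g j else 0) = (if P then (\<Sum>j\<in>A. g j) else 0)"
  by (cases P) auto

lemma struct_of_assoc:
  fixes c :: "'j::finite \<Rightarrow> 'j \<Rightarrow> 'j \<Rightarrow> 'k::comm_ring_1"
  assumes A: "\<And>a b d. amul c (amul c a b) d = amul c a (amul c b d)"
  shows "(\<Sum>m\<in>UNIV. c i j m * c m l k) = (\<Sum>m\<in>UNIV. c j l m * c i m k)"
proof -
  define e where "e = (\<lambda>i::'j. \<lambda>m::'j. if m = i then (1::'k) else 0)"
  have E: "amul c (e i) (e j) = c i j" for i j
    by (rule ext) (simp add: amul_apply e_def delta_mult sum_if_out)
  have E1: "amul c f (e j) = (\<lambda>k. \<Sum>m\<in>UNIV. f m * c m j k)" for f j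
    by (rule ext) (simp add: amul_apply e_def delta_mult sum_if_out)
  have E2: "amul c (e i) f = (\<lambda>k. \<Sum>m\<in>UNIV. f m * c i m k)" for f i
    by (rule ext) (simp add: amul_apply e_def delta_mult sum_if_out)
  have E0: "(\<Sum>m\<in>UNIV. e i m * g m) = g i" for i g
    by (simp add: e_def delta_mult)
  have "amul c (amul c (e i) (e j)) (e l) k = amul c (e i) (amul c (e j) (e l)) k"
    by (simp add: A)
  then show ?thesis by (simp only: E E1 E2 E0)
qed

definition c3 :: "('i \<Rightarrow> 'i \<Rightarrow> 'i \<Rightarrow> 'k::comm_ring) \<Rightarrow> 'i \<times> 'i \<times> 'i \<Rightarrow> 'i \<times> 'i \<times> 'i \<Rightarrow> 'i \<times> 'i \<times> 'i \<Rightarrow> 'k" where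
  "c3 c p q s = c (fst p) (fst q) (fst s) * c (fst (snd p)) (fst (snd q)) (fst (snd s)) * c (snd (snd p)) (snd (snd q)) (snd (snd s))"

lemma tmul3_amul: "tmul3 c T S = amul (c3 c) T S"
  by (rule ext) (simp add: tmul3_def amul_def c3_def split_def ac_simps)

lemma sum3_factor:
  "(\<Sum>p\<in>(UNIV::('a::finite \<times> 'b::finite \<times> 'c::finite) set). f (fst p) * g (fst (snd p)) * h (snd (snd p)))
   = (sum f UNIV * sum g UNIV * sum h UNIV :: 'k::comm_semiring_0)"
proof -
  have U: "(UNIV::('a \<times> 'b \<times> 'c) set) = UNIV \<times> (UNIV \<times> UNIV)" by simp
  show ?thesis
    unfolding U sum.cartesian_product' 
    by (simp add: sum_distrib_left[symmetric] sum_distrib_right[symmetric] mult.assoc[symmetric])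
qed

lemma c3_struct:
  fixes c :: "'j::finite \<Rightarrow> 'j \<Rightarrow> 'j \<Rightarrow> 'k::comm_ring"
  assumes H: "\<And>i j l k. (\<Sum>m\<in>UNIV. c i j m * c m l k) = (\<Sum>m\<in>UNIV. c j l m * c i m k)"
  shows "(\<Sum>m\<in>UNIV. c3 c i j m * c3 c m l k) = (\<Sum>m\<in>UNIV. c3 c j l m * c3 c i m k)"
proof -
  have L: "(\<Sum>m\<in>UNIV. c3 c i j m * c3 c m l k) =
     (\<Sum>x\<in>UNIV. c (fst i) (fst j) x * c x (fst l) (fst k)) *
     (\<Sum>x\<in>UNIV. c (fst (snd i)) (fst (snd j)) x * c x (fst (snd l)) (fst (snd k))) *
     (\<Sum>x\<in>UNIV. c (snd (snd i)) (snd (snd j)) x * c x (snd (snd l)) (snd (snd k)))"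
    unfolding sum3_factor[symmetric] by (rule sum.cong[OF refl]) (simp add: c3_def ac_simps)
  have R: "(\<Sum>m\<in>UNIV. c3 c j l m * c3 c i m k) =
     (\<Sum>x\<in>UNIV. c (fst j) (fst l) x * c (fst i) x (fst k)) *
     (\<Sum>x\<in>UNIV. c (fst (snd j)) (fst (snd l)) x * c (fst (snd i)) x (fst (snd k))) *
     (\<Sum>x\<in>UNIV. c (snd (snd j)) (snd (snd l)) x * c (snd (snd i)) x (snd (snd k)))"
    unfolding sum3_factor[symmetric] by (rule sum.cong[OF refl]) (simp add: c3_def ac_simps)
  show ?thesis unfolding L R H ..
qed

definition pt :: "('i \<Rightarrow> 'k::comm_ring) \<Rightarrow> ('i \<Rightarrow> 'k) \<Rightarrow> ('i \<Rightarrow> 'k) \<Rightarrow> 'i \<times> 'i \<times> 'i \<Rightarrow> 'k" where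
  "pt a b d = (\<lambda>p. a (fst p) * b (fst (snd p)) * d (snd (snd p)))"

lemma pt_mult:
  fixes c :: "'j::finite \<Rightarrow> 'j \<Rightarrow> 'j \<Rightarrow> 'k::comm_ring"
  shows "amul (c3 c) (pt a b d) (pt a' b' d') = pt (amul c a a') (amul c b b') (amul c d d')"
proof
  fix k :: "'j \<times> 'j \<times> 'j"
  have "amul (c3 c) (pt a b d) (pt a' b' d') k = (\<Sum>p\<in>UNIV. \<Sum>q\<in>UNIV.
      (a (fst p) * a' (fst q) * c (fst p) (fst q) (fst k)) *
      (b (fst (snd p)) * b' (fst (snd q)) * c (fst (snd p)) (fst (snd q)) (fst (snd k))) *
      (d (snd (snd p)) * d' (snd (snd q)) * c (snd (snd p)) (snd (snd q)) (snd (snd k))))"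
    by (simp add: amul_apply pt_def c3_def ac_simps)
  also have "\<dots> = (\<Sum>p\<in>UNIV.
      (\<Sum>y\<in>UNIV. a (fst p) * a' y * c (fst p) y (fst k)) *
      (\<Sum>y\<in>UNIV. b (fst (snd p)) * b' y * c (fst (snd p)) y (fst (snd k))) *
      (\<Sum>y\<in>UNIV. d (snd (snd p)) * d' y * c (snd (snd p)) y (snd (snd k))))"
    by (rule sum.cong[OF refl], rule sum3_factor)
  also have "\<dots> = (\<Sum>x\<in>UNIV. \<Sum>y\<in>UNIV. a x * a' y * c x y (fst k)) *
      (\<Sum>x\<in>UNIV. \<Sum>y\<in>UNIV. b x * b' y * c x y (fst (snd k))) *
      (\<Sum>x\<in>UNIV. \<Sum>y\<in>UNIV. d x * d' y * c x y (snd (snd k)))"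
    by (rule sum3_factor)
  also have "\<dots> = pt (amul c a a') (amul c b b') (amul c d d') k"
    by (simp add: pt_def amul_apply)
  finally show "amul (c3 c) (pt a b d) (pt a' b' d') k = pt (amul c a a') (amul c b b') (amul c d d') k" .
qed

lemma amul_add_left: "amul c (\<lambda>t. X t + Y t) Z = (\<lambda>t. amul c X Z t + amul c Y Z t)"
  by (rule ext) (simp add: amul_apply algebra_simps sum.distrib)
lemma amul_add_right: "amul c Z (\<lambda>t. X t + Y t) = (\<lambda>t. amul c Z X t + amul c Z Y t)"
  by (rule ext) (simp add: amul_apply algebra_simps sum.distrib)
lemma amul_diff_left: "amul c (\<lambda>t. X t - Y t) Z = (\<lambda>t. amul c X Z t - amul c Y Z t)"
  by (rule ext) (simp add: amul_apply algebra_simps sum_subtractf)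
lemma amul_diff_right: "amul c Z (\<lambda>t. X t - Y t) = (\<lambda>t. amul c Z X t - amul c Z Y t)"
  by (rule ext) (simp add: amul_apply algebra_simps sum_subtractf)
lemma amul_scale_left: "amul c (\<lambda>t. s * X t) Z = (\<lambda>t. s * amul c X Z t)"
  by (rule ext) (simp add: amul_apply sum_distrib_left ac_simps)
lemma amul_scale_right: "amul c Z (\<lambda>t. s * X t) = (\<lambda>t. s * amul c Z X t)"
  by (rule ext) (simp add: amul_apply sum_distrib_left ac_simps)
lemma amul_sum_left: "amul c (\<lambda>t. \<Sum>p\<in>P. X p t) Z = (\<lambda>t. \<Sum>p\<in>P. amul c (X p) Z t)"
proof (rule ext)
  fix t
  show "amul c (\<lambda>t. \<Sum>p\<in>P. X p t) Z t = (\<Sum>p\<in>P. amul c (X p) Z t)"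
    apply (simp add: amul_apply sum_distrib_right)
    by (rule sum3_rot2[symmetric])
qed
lemma amul_sum_right: "amul c Z (\<lambda>t. \<Sum>p\<in>P. X p t) = (\<lambda>t. \<Sum>p\<in>P. amul c Z (X p) t)"
proof (rule ext)
  fix t
  show "amul c Z (\<lambda>t. \<Sum>p\<in>P. X p t) t = (\<Sum>p\<in>P. amul c Z (X p) t)"
    apply (simp add: amul_apply sum_distrib_right sum_distrib_left)
    by (rule sum3_rot2[symmetric])
qed

lemma delta3_pt: "delta3 one x = (\<lambda>t. pt x one one t + pt one x one t + pt one one x t)"
  by (rule ext) (simp add: delta3_def pt_def split_def)

lemma sym_identity:
  fixes c :: "'j::finite \<Rightarrow> 'j \<Rightarrow> 'j \<Rightarrow> 'k::comm_ring"
  assumes assoc: "\<And>a b d. amul c (amul c a b) d = amul c a (amul c b d)"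
    and unitl: "\<And>a. amul c one a = a" and unitr: "\<And>a. amul c a one = a"
  shows "(\<lambda>t. pt a b d t + pt a d b t + pt b a d t + pt b d a t + pt d a b t + pt d b a t) =
    (\<lambda>t. amul (c3 c) (amul (c3 c) (delta3 one a) (delta3 one b)) (delta3 one d) t
        - amul (c3 c) (delta3 one (amul c a b)) (delta3 one d) t
        - amul (c3 c) (delta3 one (amul c a d)) (delta3 one b) t
        - amul (c3 c) (delta3 one a) (delta3 one (amul c b d)) t
        + delta3 one (amul c a (amul c b d)) t + delta3 one (amul c a (amul c d b)) t)"
  apply (simp only: delta3_pt amul_add_left amul_add_right pt_mult unitl unitr assoc)
  apply (rule ext)
  apply (simp add: algebra_simps)
  done

lemma C_add: "amul c K X = amul c X K \<Longrightarrow> amul c K Y = amul c Y K \<Longrightarrow>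
   amul c K (\<lambda>t. X t + Y t) = amul c (\<lambda>t. X t + Y t) K"
  by (simp add: amul_add_left amul_add_right)
lemma C_diff: "amul c K X = amul c X K \<Longrightarrow> amul c K Y = amul c Y K \<Longrightarrow>
   amul c K (\<lambda>t. X t - Y t) = amul c (\<lambda>t. X t - Y t) K"
  by (simp add: amul_diff_left amul_diff_right)
lemma C_mult:
  assumes MA: "\<And>X Y Z. amul c (amul c X Y) Z = amul c X (amul c Y Z)"
  shows "amul c K X = amul c X K \<Longrightarrow> amul c K Y = amul c Y K \<Longrightarrow>
   amul c K (amul c X Y) = amul c (amul c X Y) K"
  by (metis MA)
lemma C_sum: "(\<And>p. amul c K (X p) = amul c (X p) K) \<Longrightarrow>
   amul c K (\<lambda>t. \<Sum>p\<in>P. f p * X p t) = amul c (\<lambda>t. \<Sum>p\<in>P. f p * X p t) K"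
  by (simp add: amul_sum_left amul_sum_right amul_scale_left amul_scale_right)

definition ev :: "'i \<Rightarrow> 'i \<Rightarrow> 'k::comm_ring_1" where "ev a = (\<lambda>m. if m = a then 1 else 0)"

lemma pick3:
  fixes S :: "'i::finite \<times> 'i \<times> 'i \<Rightarrow> 'k::comm_ring_1"
  assumes "\<And>q. (fst t = f1 q \<and> fst (snd t) = f2 q \<and> snd (snd t) = f3 q) \<longleftrightarrow> q = q0"
  shows "(\<Sum>q\<in>UNIV. S q * pt (ev (f1 q)) (ev (f2 q)) (ev (f3 q)) t) = S q0"
proof -
  have "(\<Sum>q\<in>UNIV. S q * pt (ev (f1 q)) (ev (f2 q)) (ev (f3 q)) t) = (\<Sum>q\<in>UNIV. if q = q0 then S q else 0)"
  proof (rule sum.cong[OF refl])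
    fix q
    have eq: "pt (ev (f1 q)) (ev (f2 q)) (ev (f3 q)) t = (if q = q0 then 1 else 0)"
      using assms[of q] by (auto simp: pt_def ev_def)
    then show "S q * pt (ev (f1 q)) (ev (f2 q)) (ev (f3 q)) t = (if q = q0 then S q else 0)"
      by (simp only: eq) simp
  qed
  then show ?thesis by simp
qed

lemma comm3_iff: "comm3 c X Y = (\<lambda>_. 0) \<longleftrightarrow> amul (c3 c) X Y = amul (c3 c) Y X"
  by (simp add: comm3_def tmul3_amul fun_eq_iff)

theorem mainTheorem6:
  fixes c :: "'i::finite \<Rightarrow> 'i \<Rightarrow> 'i \<Rightarrow> 'k::real_normed_field"
    and one :: "'i \<Rightarrow> 'k"
    and r :: "'i \<Rightarrow> 'i \<Rightarrow> 'k"
  assumes "unital_assoc_algebra c one"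
    and "skew2 r"
  shows "(\<forall>T. fully_symmetric3 T \<longrightarrow> comm3 c (cybe c one r) T = (\<lambda>_. 0))
     \<longleftrightarrow> (\<forall>x. comm3 c (cybe c one r) (delta3 one x) = (\<lambda>_. 0))"
proof -
  define K where "K = cybe c one r"
  have assoc: "\<And>a b d. amul c (amul c a b) d = amul c a (amul c b d)"
    and unitl: "\<And>a. amul c one a = a" and unitr: "\<And>a. amul c a one = a"
    using assms(1) unfolding unital_assoc_algebra_def by auto
  have H: "\<And>i j l k. (\<Sum>m\<in>UNIV. c i j m * c m l k) = (\<Sum>m\<in>UNIV. c j l m * c i m k)"
    by (rule struct_of_assoc[OF assoc])
  have MA: "\<And>X Y Z. amul (c3 c) (amul (c3 c) X Y) Z = amul (c3 c) X (amul (c3 c) Y Z)"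
    by (rule amul_assoc_struct, rule c3_struct[OF H])
  have fs: "fully_symmetric3 (delta3 one x)" for x
    unfolding fully_symmetric3_def delta3_def by (simp add: ac_simps)
  show ?thesis
    unfolding K_def[symmetric] comm3_iff
  proof
    assume "\<forall>T. fully_symmetric3 T \<longrightarrow> amul (c3 c) K T = amul (c3 c) T K"
    then show "\<forall>x. amul (c3 c) K (delta3 one x) = amul (c3 c) (delta3 one x) K" using fs by blast
  next
    assume D: "\<forall>x. amul (c3 c) K (delta3 one x) = amul (c3 c) (delta3 one x) K"
    show "\<forall>T. fully_symmetric3 T \<longrightarrow> amul (c3 c) K T = amul (c3 c) T K"
    proof (intro allI impI)
      fix S :: "'i \<times> 'i \<times> 'i \<Rightarrow> 'k" assume S: "fully_symmetric3 S"
      define Sym :: "('i \<Rightarrow> 'k) \<Rightarrow> ('i \<Rightarrow> 'k) \<Rightarrow> ('i \<Rightarrow> 'k) \<Rightarrow> 'i \<times> 'i \<times> 'i \<Rightarrow> 'k" where "Sym = (\<lambda>a b d. (\<lambda>t. pt a b d t + pt a d b t + pt b a d t + pt b d a t + pt d a b t + pt d b a t))"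
      have CS: "amul (c3 c) K (Sym a b d) = amul (c3 c) (Sym a b d) K" for a b d
        unfolding Sym_def sym_identity[OF assoc unitl unitr]
        by (intro C_add C_diff C_mult[OF MA] D[rule_format])
      have six: "(\<lambda>t. 6 * S t) = (\<lambda>t. \<Sum>q\<in>UNIV. S q * Sym (ev (fst q)) (ev (fst (snd q))) (ev (snd (snd q))) t)"
      proof (rule ext)
        fix t :: "'i \<times> 'i \<times> 'i"
        obtain i j k where t: "t = (i, j, k)" by (cases t) auto
        have P0: "(\<Sum>q\<in>UNIV. S q * pt (ev (fst q)) (ev (fst (snd q))) (ev (snd (snd q))) t) = S (i, j, k)"
            unfolding t by (rule pick3) auto
        have P1: "(\<Sum>q\<in>UNIV. S q * pt (ev (fst q)) (ev (snd (snd q))) (ev (fst (snd q))) t) = S (i, k, j)"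
            unfolding t by (rule pick3) auto
        have P2: "(\<Sum>q\<in>UNIV. S q * pt (ev (fst (snd q))) (ev (fst q)) (ev (snd (snd q))) t) = S (j, i, k)"
            unfolding t by (rule pick3) auto
        have P3: "(\<Sum>q\<in>UNIV. S q * pt (ev (fst (snd q))) (ev (snd (snd q))) (ev (fst q)) t) = S (k, i, j)"
            unfolding t by (rule pick3) auto
        have P4: "(\<Sum>q\<in>UNIV. S q * pt (ev (snd (snd q))) (ev (fst q)) (ev (fst (snd q))) t) = S (j, k, i)"
            unfolding t by (rule pick3) auto
        have P5: "(\<Sum>q\<in>UNIV. S q * pt (ev (snd (snd q))) (ev (fst (snd q))) (ev (fst q)) t) = S (k, j, i)"
            unfolding t by (rule pick3) auto
        have "(\<Sum>q\<in>UNIV. S q * Sym (ev (fst q)) (ev (fst (snd q))) (ev (snd (snd q))) t)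
          = (\<Sum>q\<in>UNIV. S q * pt (ev (fst q)) (ev (fst (snd q))) (ev (snd (snd q))) t)
          + (\<Sum>q\<in>UNIV. S q * pt (ev (fst q)) (ev (snd (snd q))) (ev (fst (snd q))) t)
          + (\<Sum>q\<in>UNIV. S q * pt (ev (fst (snd q))) (ev (fst q)) (ev (snd (snd q))) t)
          + (\<Sum>q\<in>UNIV. S q * pt (ev (fst (snd q))) (ev (snd (snd q))) (ev (fst q)) t)
          + (\<Sum>q\<in>UNIV. S q * pt (ev (snd (snd q))) (ev (fst q)) (ev (fst (snd q))) t)
          + (\<Sum>q\<in>UNIV. S q * pt (ev (snd (snd q))) (ev (fst (snd q))) (ev (fst q)) t)"
          by (simp add: Sym_def distrib_left sum.distrib)
        also have "\<dots> = S (i, j, k) + S (i, k, j) + S (j, i, k) + S (k, i, j) + S (j, k, i) + S (k, j, i)"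
          by (simp only: P0 P1 P2 P3 P4 P5)
        also have "\<dots> = 6 * S t"
        proof -
          have "S (i,k,j) = S (i,j,k)" "S (j,i,k) = S (i,j,k)" "S (k,i,j) = S (i,j,k)"
            "S (j,k,i) = S (i,j,k)" "S (k,j,i) = S (i,j,k)"
            using S unfolding fully_symmetric3_def by metis+
          moreover have "6 * x = x + x + x + x + x + (x::'k)" for x by simp
          ultimately show ?thesis unfolding t by simp
        qed
        finally show "6 * S t = (\<Sum>q\<in>UNIV. S q * Sym (ev (fst q)) (ev (fst (snd q))) (ev (snd (snd q))) t)" by simp
      qed
      have "amul (c3 c) K (\<lambda>t. 6 * S t) = amul (c3 c) (\<lambda>t. 6 * S t) K"
        unfolding six by (rule C_sum) (rule CS)
      then have "(\<lambda>t. 6 * amul (c3 c) K S t) = (\<lambda>t. 6 * amul (c3 c) S K t)"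
        unfolding amul_scale_left amul_scale_right .
      then show "amul (c3 c) K S = amul (c3 c) S K" by (simp add: fun_eq_iff)
    qed
  qed
qed

end
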